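(* Let $G$ be a triangle-free graph. There exists a positive integer $r_0$ such that $\rho_o(G\square K_r)=\alpha_2(G)$ for every integer $r\geq r_0$.
   Context: All graphs are finite and simple. An open packing of $G$ is a set $P\subseteq V(G)$ whose vertices have pairwise disjoint open neighborhoods; $\rho_o(G)$ is the maximum size of an open packing. A set $S\subseteq V(G)$ is $2$-independent if $G[S]$ has maximum degree less than $2$; $\alpha_2(G)$ is the maximum size of a $2$-independent set. $K_r$ is the complete graph on $r$ vertices and $\square$ denotes the Cartesian product: $(g,h)\sim(g',h')$ iff ($gg'\in E(G)$, $h=h'$) or ($g=g'$, $hh'\in E(H)$). *)

theory Defs
  imports Main
begin

definition simple_graph :: "'a set \<Rightarrow> ('a \<Rightarrow> 'a \<Rightarrow> bool) \<Rightarrow> bool" where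
  "simple_graph V E \<longleftrightarrow> finite V \<and> (\<forall>u v. E u v \<longrightarrow> u \<in> V \<and> v \<in> V)
     \<and> (\<forall>u v. E u v \<longrightarrow> E v u) \<and> (\<forall>v. \<not> E v v)"

definition open_nbhd :: "'a set \<Rightarrow> ('a \<Rightarrow> 'a \<Rightarrow> bool) \<Rightarrow> 'a \<Rightarrow> 'a set" where
  "open_nbhd V E v = {u \<in> V. E v u}"

definition open_packing :: "'a set \<Rightarrow> ('a \<Rightarrow> 'a \<Rightarrow> bool) \<Rightarrow> 'a set \<Rightarrow> bool" where
  "open_packing V E P \<longleftrightarrow> P \<subseteq> V \<and>
     (\<forall>u\<in>P. \<forall>v\<in>P. u \<noteq> v \<longrightarrow> open_nbhd V E u \<inter> open_nbhd V E v = {})"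

definition open_packing_number :: "'a set \<Rightarrow> ('a \<Rightarrow> 'a \<Rightarrow> bool) \<Rightarrow> nat" where
  "open_packing_number V E = Max (card ` {P. open_packing V E P})"

definition two_independent :: "'a set \<Rightarrow> ('a \<Rightarrow> 'a \<Rightarrow> bool) \<Rightarrow> 'a set \<Rightarrow> bool" where
  "two_independent V E S \<longleftrightarrow> S \<subseteq> V \<and> (\<forall>v\<in>S. card {u \<in> S. E v u} < 2)"

definition alpha2 :: "'a set \<Rightarrow> ('a \<Rightarrow> 'a \<Rightarrow> bool) \<Rightarrow> nat" where
  "alpha2 V E = Max (card ` {S. two_independent V E S})"

definition triangle_free :: "'a set \<Rightarrow> ('a \<Rightarrow> 'a \<Rightarrow> bool) \<Rightarrow> bool" where
  "triangle_free V E \<longleftrightarrow> \<not> (\<exists>x\<in>V. \<exists>y\<in>V. \<exists>z\<in>V. E x y \<and> E y z \<and> E x z)"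

definition K_verts :: "nat \<Rightarrow> nat set" where
  "K_verts r = {0..<r}"

definition K_edges :: "nat \<Rightarrow> nat \<Rightarrow> nat \<Rightarrow> bool" where
  "K_edges r i j \<longleftrightarrow> i < r \<and> j < r \<and> i \<noteq> j"

definition cart_verts :: "'a set \<Rightarrow> 'b set \<Rightarrow> ('a \<times> 'b) set" where
  "cart_verts V W = V \<times> W"

definition cart_edges :: "'a set \<Rightarrow> ('a \<Rightarrow> 'a \<Rightarrow> bool) \<Rightarrow> 'b set \<Rightarrow> ('b \<Rightarrow> 'b \<Rightarrow> bool)
    \<Rightarrow> ('a \<times> 'b) \<Rightarrow> ('a \<times> 'b) \<Rightarrow> bool" where
  "cart_edges V E W F p q \<longleftrightarrow> p \<in> V \<times> W \<and> q \<in> V \<times> W \<and>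
     ((E (fst p) (fst q) \<and> snd p = snd q) \<or> (fst p = fst q \<and> F (snd p) (snd q)))"

end

theory Submission
  imports Defs
begin

lemma opn_le:
  assumes "finite W" "\<And>P. open_packing W F P \<Longrightarrow> card P \<le> n"
  shows "open_packing_number W F \<le> n"
proof -
  have fin: "finite {P. open_packing W F P}"
    by (rule finite_subset[of _ "Pow W"]) (use assms(1) in \<open>auto simp: open_packing_def\<close>)
  have ne: "{} \<in> {P. open_packing W F P}"
    by (auto simp: open_packing_def)
  show ?thesis unfolding open_packing_number_def
    using fin ne assms(2) by (subst Max_le_iff) blast+
qed

lemma opn_ge:
  assumes "finite W" "open_packing W F P"
  shows "card P \<le> open_packing_number W F"
proof -
  have fin: "finite {P. open_packing W F P}"
    by (rule finite_subset[of _ "Pow W"]) (use assms(1) in \<open>auto simp: open_packing_def\<close>)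
  show ?thesis unfolding open_packing_number_def
    using fin assms(2) by (intro Max_ge) auto
qed

lemma a2_le:
  assumes "finite W" "\<And>S. two_independent W F S \<Longrightarrow> card S \<le> n"
  shows "alpha2 W F \<le> n"
proof -
  have fin: "finite {S. two_independent W F S}"
    by (rule finite_subset[of _ "Pow W"]) (use assms(1) in \<open>auto simp: two_independent_def\<close>)
  have ne: "{} \<in> {S. two_independent W F S}"
    by (auto simp: two_independent_def)
  show ?thesis unfolding alpha2_def
    using fin ne assms(2) by (subst Max_le_iff) blast+
qed

lemma a2_ge:
  assumes "finite W" "two_independent W F S"
  shows "card S \<le> alpha2 W F"
proof -
  have fin: "finite {S. two_independent W F S}"
    by (rule finite_subset[of _ "Pow W"]) (use assms(1) in \<open>auto simp: two_independent_def\<close>)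
  show ?thesis unfolding alpha2_def
    using fin assms(2) by (intro Max_ge) auto
qed

lemma conflict:
  assumes "open_packing W F P" "p \<in> P" "q \<in> P" "x \<in> W" "F p x" "F q x"
  shows "p = q"
  using assms unfolding open_packing_def open_nbhd_def by blast

lemma ub:
  assumes sg: "simple_graph V E" and r: "3 \<le> r"
    and P: "open_packing (V \<times> {0..<r}) (cart_edges V E {0..<r} (K_edges r)) P"
  shows "two_independent V E (fst ` P) \<and> card (fst ` P) = card P"
proof -
  let ?W = "V \<times> {0..<r}" and ?F = "cart_edges V E {0..<r} (K_edges r)"
  have PW: "P \<subseteq> ?W" using P by (simp add: open_packing_def)
  have finV: "finite V" using sg unfolding simple_graph_def by blast
  have finP: "finite P" using PW finV by (rule_tac finite_subset[OF PW]) simp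
  have inj: "inj_on fst P"
  proof (rule inj_onI)
    fix p q assume pq: "p \<in> P" "q \<in> P" "fst p = fst q"
    obtain g i j where p: "p = (g,i)" and q: "q = (g,j)" using pq(3) by (cases p, cases q) auto
    show "p = q"
    proof (rule ccontr)
      assume "p \<noteq> q" then have ij: "i \<noteq> j" using p q by auto
      have "\<exists>k::nat. k < 3 \<and> k \<noteq> i \<and> k \<noteq> j" by presburger
      then obtain k where k: "k < 3" "k \<noteq> i" "k \<noteq> j" by blast
      have kr: "k < r" using k r by auto
      have gV: "g \<in> V" "i < r" "j < r" using PW pq p q by auto
      have "(g,k) \<in> ?W" using gV kr by auto
      moreover have "?F p (g,k)" "?F q (g,k)" using gV kr k p q
        by (auto simp: cart_edges_def K_edges_def)
      ultimately have "p = q" using conflict[OF P pq(1,2)] by blast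
      then show False using \<open>p \<noteq> q\<close> by simp
    qed
  qed
  have ti: "two_independent V E (fst ` P)"
    unfolding two_independent_def
  proof (intro conjI ballI)
    show "fst ` P \<subseteq> V" using PW by auto
    fix g assume "g \<in> fst ` P"
    then obtain i where gi: "(g,i) \<in> P" by force
    show "card {u \<in> fst ` P. E g u} < 2"
    proof (rule ccontr)
      assume "\<not> ?thesis"
      then have "2 \<le> card {u \<in> fst ` P. E g u}" by simp
      have finA: "finite {u \<in> fst ` P. E g u}"
        using finP by simp
      have "\<not> card {u \<in> fst ` P. E g u} \<le> Suc 0" using \<open>2 \<le> _\<close> by simp
      then obtain h1 h2 where "h1 \<in> {u \<in> fst ` P. E g u}" "h2 \<in> {u \<in> fst ` P. E g u}" "h1 \<noteq> h2"
        using card_le_Suc0_iff_eq[OF finA] by blast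
      then have h: "h1 \<in> fst ` P" "E g h1" "h2 \<in> fst ` P" "E g h2" "h1 \<noteq> h2" by auto
      obtain j1 j2 where hj: "(h1,j1) \<in> P" "(h2,j2) \<in> P" using h by force
      have sgE: "\<And>u v. E u v \<Longrightarrow> u \<in> V \<and> v \<in> V" "\<And>u v. E u v \<Longrightarrow> E v u" "\<And>v. \<not> E v v"
        using sg unfolding simple_graph_def by blast+
      have rng: "i < r" "j1 < r" "j2 < r" using PW gi hj by auto
      have same: "i = j" if hj': "(h, j) \<in> P" "E g h" for h j
      proof (rule ccontr)
        assume ij: "i \<noteq> j"
        have "(g,j) \<in> ?W" using sgE(1)[OF that(2)] PW hj' by auto
        moreover have "?F (g,i) (g,j)" "?F (h,j) (g,j)" using sgE(1)[OF that(2)] sgE(2)[OF that(2)] that ij PW gi hj'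
          by (auto simp: cart_edges_def K_edges_def)
        ultimately have "(g,i) = (h,j)" using conflict[OF P gi hj'(1)] by blast
        then show False using sgE(3)[of g] that(2) by auto
      qed
      have "i = j1" "i = j2" using same[OF hj(1) h(2)] same[OF hj(2) h(4)] by auto
      moreover have "(g,i) \<in> ?W" using PW gi by auto
      moreover have "?F (h1,i) (g,i)" "?F (h2,i) (g,i)" using sgE(1)[OF h(2)] sgE(1)[OF h(4)] sgE(2)[OF h(2)] sgE(2)[OF h(4)] PW gi hj calculation
        by (auto simp: cart_edges_def)
      ultimately have "(h1,i) = (h2,i)" using conflict[OF P, of "(h1,i)" "(h2,i)" "(g,i)"] hj by blast
      then show False using h by simp
    qed
  qed
  show ?thesis using ti inj card_image by blast
qed

lemma nbr_unique:
  assumes S: "two_independent V E S" and fin: "finite V" and a: "a \<in> S"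
    and u: "u \<in> S" "E a u" and v: "v \<in> S" "E a v"
  shows "u = v"
proof -
  have fa: "finite {w \<in> S. E a w}"
    by (rule finite_subset[OF _ fin]) (use S in \<open>auto simp: two_independent_def\<close>)
  have "card {w \<in> S. E a w} < 2" using S a unfolding two_independent_def by blast
  then have "card {w \<in> S. E a w} \<le> Suc 0" by simp
  then show ?thesis using card_le_Suc0_iff_eq[OF fa] u v by blast
qed

lemma lb:
  assumes sg: "simple_graph V E" and tf: "triangle_free V E" and r: "card V \<le> r"
    and S: "two_independent V E S"
  shows "\<exists>P. open_packing (V \<times> {0..<r}) (cart_edges V E {0..<r} (K_edges r)) P \<and> card P = card S"
proof -
  let ?W = "V \<times> {0..<r}" and ?F = "cart_edges V E {0..<r} (K_edges r)"
  have finV: "finite V" using sg unfolding simple_graph_def by blast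
  have EV: "\<And>u v. E u v \<Longrightarrow> u \<in> V \<and> v \<in> V" using sg unfolding simple_graph_def by blast
  have Esym: "\<And>u v. E u v \<Longrightarrow> E v u" using sg unfolding simple_graph_def by blast
  have Eirr: "\<And>v. \<not> E v v" using sg unfolding simple_graph_def by blast
  have SV: "S \<subseteq> V" using S unfolding two_independent_def by blast
  obtain idx where idx: "bij_betw idx V {0..<card V}" using ex_bij_betw_finite_nat[OF finV] by blast
  have injidx: "inj_on idx V" using idx bij_betw_def by blast
  have idxr: "\<And>v. v \<in> V \<Longrightarrow> idx v < card V" using idx bij_betwE by fastforce
  define c where "c v = insert v {u \<in> S. E v u}" for v
  define L where "L v = Min (idx ` c v)" for v
  define P where "P = (\<lambda>v. (v, L v)) ` S"
  have cS: "c v \<subseteq> S" if "v \<in> S" for v using that unfolding c_def by blast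
  have cfin: "finite (c v)" if "v \<in> S" for v
    using cS[OF that] SV finV by (simp add: finite_subset)
  have Lin: "L v \<in> idx ` c v" if "v \<in> S" for v
    unfolding L_def using cfin[OF that] by (intro Min_in) (auto simp: c_def)
  have Lr: "L v < r" if vS: "v \<in> S" for v
  proof -
    obtain a where "a \<in> c v" "L v = idx a" using Lin[OF vS] by blast
    then have "a \<in> V" using cS[OF vS] SV by blast
    then show ?thesis using idxr \<open>L v = idx a\<close> r by (metis order_less_le_trans)
  qed
  have adj: "L u = L v" if "u \<in> S" "v \<in> S" "E u v" for u v
  proof -
    have "{w \<in> S. E u w} = {v}" using nbr_unique[OF S finV that(1)] that by blast
    moreover have "{w \<in> S. E v w} = {u}" using nbr_unique[OF S finV that(2)] that Esym[OF that(3)] by blast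
    ultimately have "c u = c v" unfolding c_def by blast
    then show ?thesis unfolding L_def by simp
  qed
  have nonadj: "L u \<noteq> L v" if H: "u \<in> S" "v \<in> S" "u \<noteq> v" "\<not> E u v" for u v
  proof
    assume eq: "L u = L v"
    obtain a where a: "a \<in> c u" "L u = idx a" using Lin[OF H(1)] by blast
    obtain b where b: "b \<in> c v" "L v = idx b" using Lin[OF H(2)] by blast
    have "a \<in> V" "b \<in> V" using a b cS H SV by blast+
    then have ab: "a = b" using injidx eq a b by (metis inj_onD)
    have nvu: "\<not> E v u" using H Esym by blast
    show False
    proof (cases "a = u")
      case True
      then show ?thesis using ab b H nvu unfolding c_def by blast
    next
      case False
      then have "a \<in> S" "E u a" using a cS H unfolding c_def by blast+
      show ?thesis
      proof (cases "a = v")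
        case True
        then show ?thesis using \<open>E u a\<close> H by blast
      next
        case False
        then have "E v a" using ab b unfolding c_def by blast
        have "E a u" "E a v" using Esym \<open>E u a\<close> \<open>E v a\<close> by blast+
        then have "u = v" using nbr_unique[OF S finV \<open>a \<in> S\<close> H(1) _ H(2)] by blast
        then show ?thesis using H by blast
      qed
    qed
  qed
  have PW: "P \<subseteq> ?W" unfolding P_def using SV Lr by auto
  have op: "open_packing ?W ?F P"
    unfolding open_packing_def
  proof (intro conjI ballI impI)
    show "P \<subseteq> ?W" by (rule PW)
    fix p q assume pq: "p \<in> P" "q \<in> P" "p \<noteq> q"
    obtain u v where p: "p = (u, L u)" "u \<in> S" and q: "q = (v, L v)" "v \<in> S"
      using pq unfolding P_def by blast
    have uv: "u \<noteq> v" using p q pq by blast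
    show "open_nbhd ?W ?F p \<inter> open_nbhd ?W ?F q = {}"
    proof (rule ccontr)
      assume "\<not> ?thesis"
      then obtain x where x: "x \<in> ?W" "?F p x" "?F q x"
        unfolding open_nbhd_def by blast
      obtain y k where "x = (y,k)" by (cases x)
      then have yk: "(y,k) \<in> ?W" "?F p (y,k)" "?F q (y,k)" using x by simp_all
      have A: "(E u y \<and> L u = k) \<or> (u = y \<and> K_edges r (L u) k)"
        using yk(2) p unfolding cart_edges_def by simp
      have B: "(E v y \<and> L v = k) \<or> (v = y \<and> K_edges r (L v) k)"
        using yk(3) q unfolding cart_edges_def by simp
      show False
      proof (cases "E u y \<and> L u = k")
        case True
        note T = this
        show False
        proof (cases "E v y \<and> L v = k")
          case True
          then have "L u = L v" using T by simp
          then have "E u v" using nonadj[OF p(2) q(2) uv] by blast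
          moreover have "u \<in> V" "v \<in> V" "y \<in> V" using EV T True by blast+
          ultimately show False using tf T True unfolding triangle_free_def by blast
        next
          case False
          then have "v = y" "L v \<noteq> k" using B unfolding K_edges_def by blast+
          then show False using adj[OF p(2) q(2)] T by simp
        qed
      next
        case False
        then have uy: "u = y" "L u \<noteq> k" using A unfolding K_edges_def by blast+
        show False
        proof (cases "E v y \<and> L v = k")
          case True
          then have "E u v" using uy Esym by blast
          then show False using adj[OF p(2) q(2)] True uy by simp
        next
          case False
          then have "v = y" using B by blast
          then show False using uy uv by simp
        qed
      qed
    qed
  qed
  have "card P = card S" unfolding P_def by (rule card_image) (auto intro: inj_onI)
  then show ?thesis using op by blast
qed

theorem mainTheorem7:
  fixes V :: "'a set" and E :: "'a \<Rightarrow> 'a \<Rightarrow> bool"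
  assumes "simple_graph V E" and "triangle_free V E"
  shows "\<exists>r0::nat. r0 > 0 \<and> (\<forall>r\<ge>r0.
           open_packing_number (cart_verts V (K_verts r)) (cart_edges V E (K_verts r) (K_edges r))
           = alpha2 V E)"
proof (intro exI[of _ "card V + 3"] conjI allI impI)
  show "0 < card V + 3" by simp
  fix r assume r: "card V + 3 \<le> r"
  have finV: "finite V" using assms(1) unfolding simple_graph_def by blast
  have finW: "finite (V \<times> {0..<r})" using finV by simp
  have "open_packing_number (V \<times> {0..<r}) (cart_edges V E {0..<r} (K_edges r)) \<le> alpha2 V E"
  proof (rule opn_le[OF finW])
    fix P assume "open_packing (V \<times> {0..<r}) (cart_edges V E {0..<r} (K_edges r)) P"
    from ub[OF assms(1) _ this] r
    have "two_independent V E (fst ` P)" "card (fst ` P) = card P" by auto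
    then show "card P \<le> alpha2 V E" using a2_ge[OF finV] by metis
  qed
  moreover have "alpha2 V E \<le> open_packing_number (V \<times> {0..<r}) (cart_edges V E {0..<r} (K_edges r))"
  proof (rule a2_le[OF finV])
    fix S assume "two_independent V E S"
    have "card V \<le> r" using r by simp
    from lb[OF assms this \<open>two_independent V E S\<close>] obtain P where
      "open_packing (V \<times> {0..<r}) (cart_edges V E {0..<r} (K_edges r)) P" "card P = card S"
      by force
    then show "card S \<le> open_packing_number (V \<times> {0..<r}) (cart_edges V E {0..<r} (K_edges r))"
      using opn_ge[OF finW] by metis
  qed
  ultimately show "open_packing_number (cart_verts V (K_verts r)) (cart_edges V E (K_verts r) (K_edges r))
           = alpha2 V E" unfolding cart_verts_def K_verts_def by simp
qed

end
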